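(* Let $1\le a\le n$ be integers. The degree of $v_a$ in the graph $\mathcal{L}_{[a,n]}$ (counting the self-loop at $v_a$ once, i.e. the number of integers $b$ with $a\le b\le n$ and $\operatorname{lcm}(a,b)\le n$) is $$d(v_a)=\sum_{1\le j\le \frac{n}{a}}\ \sum_{\substack{1\le \ell\le j\\ \gcd(j,\ell)=1\\ \ell\mid a}} 1.$$
   Context: For integers $k\le n$, $\mathcal{L}_{[k,n]}$ is the graph with vertices $v_k,v_{k+1},\ldots,v_n$ and an edge between $v_i$ and $v_j$ whenever $\operatorname{lcm}(i,j)\le n$; in particular each vertex has a self-loop. *)

theory Defs
  imports Main
begin

text \<open>The graph L_[k,n]: vertices k..n, edge between i and j iff lcm i j \<le> n
  (self-loops included). Vertices are identified with their integer labels.\<close>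

definition lcm_graph_edge :: "nat \<Rightarrow> nat \<Rightarrow> nat \<Rightarrow> nat \<Rightarrow> bool" where
  "lcm_graph_edge k n i j \<longleftrightarrow> i \<in> {k..n} \<and> j \<in> {k..n} \<and> lcm i j \<le> n"

definition lcm_graph_degree :: "nat \<Rightarrow> nat \<Rightarrow> nat \<Rightarrow> nat" where
  "lcm_graph_degree k n v = card {b. lcm_graph_edge k n v b}"

end

theory Submission
  imports Defs
begin

lemma fwd:
  fixes a j l n :: nat
  assumes a: "1 \<le> a" and j: "1 \<le> j" "j * a \<le> n" and l: "1 \<le> l" "l \<le> j" "coprime j l" "l dvd a"
  shows "gcd a (j * (a div l)) = a div l" and "lcm_graph_edge a n a (j * (a div l))"
proof -
  obtain m where m: "a = l * m" using l(4) by blast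
  have mpos: "m > 0" using m a by (cases m) auto
  have lpos: "l > 0" using l by simp
  have adl: "a div l = m" using m lpos by simp
  have "gcd a (j*m) = m * gcd l j" using m by (simp add: gcd_mult_right mult.commute gcd.commute)
  also have "gcd l j = 1" using l(3) by (metis coprime_iff_gcd_eq_1 coprime_commute)
  finally show "gcd a (j * (a div l)) = a div l" using adl by simp
  have "lcm a (j*m) = m * lcm l j" using m by (simp add: lcm_mult_right mult.commute lcm.commute)
  also have "lcm l j = l * j" using l(3) by (simp add: coprime_commute lcm_coprime)
  finally have lc: "lcm a (j*m) = a * j" using m by simp
  have "a \<le> j*m" using m l(2) by simp
  moreover have "j*m \<le> n"
  proof -
    have "m \<le> a" using m l(1) by simp
    then have "j*m \<le> j*a" by simp
    moreover have "j*a \<le> n" using j(2) by (simp add: mult.commute)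
    ultimately show ?thesis by (rule le_trans)
  qed
  moreover have "lcm a (j*m) \<le> n" using lc j(2) by (simp add: mult.commute)
  ultimately show "lcm_graph_edge a n a (j * (a div l))"
    unfolding lcm_graph_edge_def adl by simp
qed

theorem proposition3p1:
  fixes a n :: nat
  assumes "1 \<le> a" and "a \<le> n"
  shows "lcm_graph_degree a n a =
    (\<Sum>j\<in>{j. 1 \<le> j \<and> j * a \<le> n}.
       card {l. 1 \<le> l \<and> l \<le> j \<and> coprime j l \<and> l dvd a})"
proof -
  define J where "J = {j::nat. 1 \<le> j \<and> j * a \<le> n}"
  define L where "L = (\<lambda>j::nat. {l::nat. 1 \<le> l \<and> l \<le> j \<and> coprime j l \<and> l dvd a})"
  define B where "B = {b. lcm_graph_edge a n a b}"
  have fJ: "finite J" 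
  proof (rule finite_subset[of _ "{..n}"])
    show "J \<subseteq> {..n}"
    proof
      fix j assume "j \<in> J"
      then have "j * a \<le> n" unfolding J_def by simp
      moreover have "j \<le> j * a" using assms(1) by simp
      ultimately have "j \<le> n" by (rule le_trans[rotated])
      then show "j \<in> {..n}" by simp
    qed
  qed simp
  have fL: "\<forall>j\<in>J. finite (L j)" unfolding L_def by auto
  have bij: "bij_betw (\<lambda>(j,l). j * (a div l)) (SIGMA j:J. L j) B"
  proof (rule bij_betw_byWitness[where f' = "\<lambda>b. (b div gcd a b, a div gcd a b)"])
    show "\<forall>x\<in>(SIGMA j:J. L j). (\<lambda>b. (b div gcd a b, a div gcd a b)) ((\<lambda>(j,l). j * (a div l)) x) = x"
    proof
      fix x assume "x \<in> (SIGMA j:J. L j)"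
      then obtain j l where x: "x = (j,l)" and jj: "j \<in> J" and ll: "l \<in> L j" by blast
      have g: "gcd a (j * (a div l)) = a div l"
        using fwd(1)[OF assms(1)] jj ll unfolding J_def L_def by auto
      have lpos: "l > 0" and ld: "l dvd a" using ll unfolding L_def by auto
      obtain k where k: "a = l * k" using ld by blast
      have kpos: "k > 0" using k assms(1) by (cases k) auto
      have mpos: "a div l > 0" using k lpos kpos by simp
      have "a div (a div l) = l" using k lpos kpos by simp
      then show "(\<lambda>b. (b div gcd a b, a div gcd a b)) ((\<lambda>(j,l). j * (a div l)) x) = x"
        using x g mpos by simp
    qed
    show "\<forall>b\<in>B. (\<lambda>(j,l). j * (a div l)) ((\<lambda>b. (b div gcd a b, a div gcd a b)) b) = b"
    proof
      fix b assume "b \<in> B"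
      define d where "d = gcd a b"
      have dpos: "d > 0" unfolding d_def using assms(1) by simp
      obtain k where k: "a = d * k" unfolding d_def by (meson gcd_dvd1 dvdE)
      have kpos: "k > 0" using k assms(1) by (cases k) auto
      have "a div (a div d) = d" using k dpos kpos by simp
      then show "(\<lambda>(j,l). j * (a div l)) ((\<lambda>b. (b div gcd a b, a div gcd a b)) b) = b"
        by (simp add: d_def[symmetric]) (simp add: d_def)
    qed
    show "(\<lambda>(j,l). j * (a div l)) ` (SIGMA j:J. L j) \<subseteq> B"
      using fwd(2)[OF assms(1)] unfolding J_def L_def B_def by auto
    show "(\<lambda>b. (b div gcd a b, a div gcd a b)) ` B \<subseteq> (SIGMA j:J. L j)"
    proof
      fix y assume "y \<in> (\<lambda>b. (b div gcd a b, a div gcd a b)) ` B"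
      then obtain b where y: "y = (b div gcd a b, a div gcd a b)" and bB: "b \<in> B" by blast
      have e: "a \<le> b" "b \<le> n" "lcm a b \<le> n" using bB unfolding B_def lcm_graph_edge_def by auto
      define d where "d = gcd a b"
      have dpos: "d > 0" unfolding d_def using assms(1) by simp
      obtain a' where a': "a = d * a'" unfolding d_def by (meson gcd_dvd1 dvdE)
      obtain b' where b': "b = d * b'" unfolding d_def by (meson gcd_dvd2 dvdE)
      have ad: "a div d = a'" "b div d = b'" using a' b' dpos by auto
      have cop: "coprime b' a'" using div_gcd_coprime[of a b] assms(1) ad
        by (simp add: d_def coprime_commute)
      have a'pos: "a' \<ge> 1" using a' assms(1) by (cases a') auto
      have "a' \<le> b'" using e(1) a' b' dpos by simp
      have "lcm a b = d * lcm a' b'" using a' b' by (simp add: lcm_mult_left)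
      also have "lcm a' b' = a' * b'" using cop by (simp add: coprime_commute lcm_coprime)
      finally have "b' * a \<le> n" using e(3) a' by (simp add: ac_simps)
      then show "y \<in> (SIGMA j:J. L j)"
        unfolding y d_def[symmetric] ad J_def L_def using a'pos \<open>a' \<le> b'\<close> cop a'
        by auto
    qed
  qed
  have "lcm_graph_degree a n a = card B" unfolding lcm_graph_degree_def B_def ..
  also have "\<dots> = card (SIGMA j:J. L j)" using bij_betw_same_card[OF bij] by simp
  also have "\<dots> = (\<Sum>j\<in>J. card (L j))" using card_SigmaI[OF fJ fL] .
  finally show ?thesis unfolding J_def L_def .
qed

end
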